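(* Let $\mathcal S$ be an ash on a set $S$, let $\mu:S\to\{2\}$, and let $\mathcal A_{\mathcal S}$ be the set of (isomorphism types of) finite relational structures $\mathfrak A=(A;(R_s)_{s\in S})$ of signature $\mu$ such that for all $x,y,z\in A$ and $s,t\in S$: (1) $\neg R_s(x,x)$; (2) if $R_s(x,y)$ then $R_s(y,x)$; (3) if $R_s(x,y)$ and $R_t(x,y)$ then $s=t$, and if $R_s(x,y)$ and $R_s(x,z)$ then $y=z$; (4) if $x\neq y$ there is $r\in S$ with $R_r(x,y)$; (5) every non-empty subset of $\{r\in S:\exists u\in A\ R_r(x,u)\}$ is an element of $\mathcal S$. Then $\mathcal A_{\mathcal S}$ is an ideal of $\Omega_\mu$.
   Context: An ash on a set $S$ is a set $\mathcal S$ of finite subsets of $S$ such that: (a) $\{s\}\in\mathcal S$ for every $s\in S$; (b) for every finite subset $\mathcal F\subseteq\mathcal S$ there is $s\in S\setminus\bigcup\mathcal F$ with $\{s\}\cup F\in\mathcal S$ for every $F\in\mathcal F$; (c) for every $S'\subseteq S$ with $|S'|=|S|$ there is a finite $F\subseteq S'$ with $F\notin\mathcal S$. A relational structure of signature $\mu:S\to\{2\}$ is a set with a family of binary relations indexed by $S$. $\Omega_\mu$ is the set of isomorphism types of finite such structures, ordered by embeddability (embeddings are injective maps preserving and reflecting all relations). An ideal of $\Omega_\mu$ is a non-empty, downward closed, up-directed subset. *)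

theory Defs
  imports Main "HOL-Library.Equipollence"
begin

definition ash :: "'s set \<Rightarrow> 's set set \<Rightarrow> bool" where
  "ash S \<SS> \<longleftrightarrow>
     (\<forall>F\<in>\<SS>. finite F \<and> F \<subseteq> S) \<and>
     (\<forall>s\<in>S. {s} \<in> \<SS>) \<and>
     (\<forall>\<FF>. finite \<FF> \<and> \<FF> \<subseteq> \<SS> \<longrightarrow>
        (\<exists>s\<in>S - \<Union>\<FF>. \<forall>F\<in>\<FF>. insert s F \<in> \<SS>)) \<and>
     (\<forall>S'. S' \<subseteq> S \<and> S' \<approx> S \<longrightarrow> (\<exists>F. F \<subseteq> S' \<and> finite F \<and> F \<notin> \<SS>))"

text \<open>Isomorphism types are represented by structures whose
  carrier is a finite set of natural numbers (every finite structure is isomorphic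
  to such a one).\<close>
definition fin_struct :: "'s set \<Rightarrow> nat set \<Rightarrow> ('s \<Rightarrow> nat \<Rightarrow> nat \<Rightarrow> bool) \<Rightarrow> bool" where
  "fin_struct S A R \<longleftrightarrow> finite A \<and> (\<forall>s x y. R s x y \<longrightarrow> s \<in> S \<and> x \<in> A \<and> y \<in> A)"

definition embedding :: "'s set \<Rightarrow> (nat \<Rightarrow> nat) \<Rightarrow> nat set \<Rightarrow> ('s \<Rightarrow> nat \<Rightarrow> nat \<Rightarrow> bool)
    \<Rightarrow> nat set \<Rightarrow> ('s \<Rightarrow> nat \<Rightarrow> nat \<Rightarrow> bool) \<Rightarrow> bool" where
  "embedding S f A R B Q \<longleftrightarrow> inj_on f A \<and> f ` A \<subseteq> B \<and>
     (\<forall>s\<in>S. \<forall>x\<in>A. \<forall>y\<in>A. R s x y \<longleftrightarrow> Q s (f x) (f y))"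

definition embeds :: "'s set \<Rightarrow> nat set \<Rightarrow> ('s \<Rightarrow> nat \<Rightarrow> nat \<Rightarrow> bool)
    \<Rightarrow> nat set \<Rightarrow> ('s \<Rightarrow> nat \<Rightarrow> nat \<Rightarrow> bool) \<Rightarrow> bool" where
  "embeds S A R B Q \<longleftrightarrow> (\<exists>f. embedding S f A R B Q)"

text \<open>An ideal of \<Omega>_\<mu> (given as a predicate on representatives): non-empty,
  downward closed, up-directed with respect to embeddability.\<close>
definition is_ideal :: "'s set \<Rightarrow> (nat set \<Rightarrow> ('s \<Rightarrow> nat \<Rightarrow> nat \<Rightarrow> bool) \<Rightarrow> bool) \<Rightarrow> bool" where
  "is_ideal S P \<longleftrightarrow>
     (\<forall>A R. P A R \<longrightarrow> fin_struct S A R) \<and>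
     (\<exists>A R. P A R) \<and>
     (\<forall>A R B Q. P A R \<and> fin_struct S B Q \<and> embeds S B Q A R \<longrightarrow> P B Q) \<and>
     (\<forall>A R B Q. P A R \<and> P B Q \<longrightarrow>
        (\<exists>C T. P C T \<and> embeds S A R C T \<and> embeds S B Q C T))"

definition A_ash :: "'s set \<Rightarrow> 's set set \<Rightarrow> nat set \<Rightarrow> ('s \<Rightarrow> nat \<Rightarrow> nat \<Rightarrow> bool) \<Rightarrow> bool" where
  "A_ash S \<SS> A R \<longleftrightarrow> fin_struct S A R \<and>
     (\<forall>x\<in>A. \<forall>s\<in>S. \<not> R s x x) \<and>
     (\<forall>x\<in>A. \<forall>y\<in>A. \<forall>s\<in>S. R s x y \<longrightarrow> R s y x) \<and>
     (\<forall>x\<in>A. \<forall>y\<in>A. \<forall>s\<in>S. \<forall>t\<in>S. R s x y \<and> R t x y \<longrightarrow> s = t) \<and>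
     (\<forall>x\<in>A. \<forall>y\<in>A. \<forall>z\<in>A. \<forall>s\<in>S. R s x y \<and> R s x z \<longrightarrow> y = z) \<and>
     (\<forall>x\<in>A. \<forall>y\<in>A. x \<noteq> y \<longrightarrow> (\<exists>r\<in>S. R r x y)) \<and>
     (\<forall>x\<in>A. \<forall>F. F \<noteq> {} \<and> F \<subseteq> {r\<in>S. \<exists>u\<in>A. R r x u} \<longrightarrow> F \<in> \<SS>)"

end

theory Submission
  imports Defs
begin

definition P0 :: "'s set \<Rightarrow> 's set set \<Rightarrow> nat set \<Rightarrow> ('s \<Rightarrow> nat \<Rightarrow> nat \<Rightarrow> bool) \<Rightarrow> bool" where
  "P0 S \<SS> A R \<longleftrightarrow> fin_struct S A R \<and>
     (\<forall>x\<in>A. \<forall>s\<in>S. \<not> R s x x) \<and>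
     (\<forall>x\<in>A. \<forall>y\<in>A. \<forall>s\<in>S. R s x y \<longrightarrow> R s y x) \<and>
     (\<forall>x\<in>A. \<forall>y\<in>A. \<forall>s\<in>S. \<forall>t\<in>S. R s x y \<and> R t x y \<longrightarrow> s = t) \<and>
     (\<forall>x\<in>A. \<forall>y\<in>A. \<forall>z\<in>A. \<forall>s\<in>S. R s x y \<and> R s x z \<longrightarrow> y = z) \<and>
     (\<forall>x\<in>A. \<forall>F. F \<noteq> {} \<and> F \<subseteq> {r\<in>S. \<exists>u\<in>A. R r x u} \<longrightarrow> F \<in> \<SS>)"

lemma A_ash_P0: "A_ash S \<SS> A R \<longleftrightarrow> P0 S \<SS> A R \<and> (\<forall>x\<in>A. \<forall>y\<in>A. x \<noteq> y \<longrightarrow> (\<exists>r\<in>S. R r x y))"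
  unfolding A_ash_def P0_def by (intro iffI; elim conjE; intro conjI; assumption)

definition Unc :: "'s set \<Rightarrow> nat set \<Rightarrow> ('s \<Rightarrow> nat \<Rightarrow> nat \<Rightarrow> bool) \<Rightarrow> (nat \<times> nat) set" where
  "Unc S C T = {(x,y). x \<in> C \<and> y \<in> C \<and> x \<noteq> y \<and> \<not> (\<exists>r\<in>S. T r x y)}"

lemma step:
  assumes ash: "ash S \<SS>" and P: "P0 S \<SS> C T" and xy: "x \<in> C" "y \<in> C" "x \<noteq> y"
    and unc: "\<forall>r\<in>S. \<not> T r x y"
  shows "\<exists>T'. P0 S \<SS> C T' \<and> Unc S C T' \<subset> Unc S C T \<and>
           (\<forall>u v. (\<exists>r\<in>S. T r u v) \<longrightarrow> (\<forall>s. T' s u v = T s u v))"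
proof -
  define Col where "Col z = {r\<in>S. \<exists>u\<in>C. T r z u}" for z
  obtain fs: "fin_struct S C T" and
     Q1: "\<forall>x\<in>C. \<forall>s\<in>S. \<not> T s x x" and
     Q2: "\<forall>x\<in>C. \<forall>y\<in>C. \<forall>s\<in>S. T s x y \<longrightarrow> T s y x" and
     Q3: "\<forall>x\<in>C. \<forall>y\<in>C. \<forall>s\<in>S. \<forall>t\<in>S. T s x y \<and> T t x y \<longrightarrow> s = t" and
     Q4: "\<forall>x\<in>C. \<forall>y\<in>C. \<forall>z\<in>C. \<forall>s\<in>S. T s x y \<and> T s x z \<longrightarrow> y = z" and
     Q5: "\<forall>x\<in>C. \<forall>F. F \<noteq> {} \<and> F \<subseteq> {r\<in>S. \<exists>u\<in>C. T r x u} \<longrightarrow> F \<in> \<SS>"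
    using P unfolding P0_def by (elim conjE)
  have P1: "\<And>u r. u \<in> C \<Longrightarrow> r \<in> S \<Longrightarrow> \<not> T r u u" using Q1 by blast
  have P2: "\<And>u v r. u \<in> C \<Longrightarrow> v \<in> C \<Longrightarrow> r \<in> S \<Longrightarrow> T r u v \<Longrightarrow> T r v u" using Q2 by blast
  have P3: "\<And>u v r t. u \<in> C \<Longrightarrow> v \<in> C \<Longrightarrow> r \<in> S \<Longrightarrow> t \<in> S \<Longrightarrow> T r u v \<Longrightarrow> T t u v \<Longrightarrow> r = t"
    using Q3 by blast
  have P4: "\<And>u v w r. u \<in> C \<Longrightarrow> v \<in> C \<Longrightarrow> w \<in> C \<Longrightarrow> r \<in> S \<Longrightarrow> T r u v \<Longrightarrow> T r u w \<Longrightarrow> v = w"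
    using Q4 by blast
  have P5: "\<And>z F. z \<in> C \<Longrightarrow> F \<noteq> {} \<Longrightarrow> F \<subseteq> Col z \<Longrightarrow> F \<in> \<SS>"
    using Q5 unfolding Col_def by blast
  obtain ashF0: "\<forall>F\<in>\<SS>. finite F \<and> F \<subseteq> S" and ashS0: "\<forall>s\<in>S. {s} \<in> \<SS>" and
     ashB0: "\<forall>FF. finite FF \<and> FF \<subseteq> \<SS> \<longrightarrow> (\<exists>s\<in>S - \<Union>FF. \<forall>F\<in>FF. insert s F \<in> \<SS>)"
    using ash unfolding ash_def by (elim conjE)
  have ashF: "\<And>F. F \<in> \<SS> \<Longrightarrow> finite F \<and> F \<subseteq> S" using ashF0 by blast
  have ashS: "\<And>s. s \<in> S \<Longrightarrow> {s} \<in> \<SS>" using ashS0 by blast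
  have ashB: "\<And>FF. finite FF \<Longrightarrow> FF \<subseteq> \<SS> \<Longrightarrow> \<exists>s\<in>S - \<Union>FF. \<forall>F\<in>FF. insert s F \<in> \<SS>"
    using ashB0 by blast
  have colfin: "finite (Col z)" if "z \<in> C" for z
  proof (cases "Col z = {}")
    case False
    then show ?thesis using P5[OF that False] ashF by blast
  qed simp
  define FF where "FF = {F. F \<noteq> {} \<and> F \<subseteq> Col x} \<union> {F. F \<noteq> {} \<and> F \<subseteq> Col y}"
  have "finite FF" unfolding FF_def
    by (rule finite_subset[of _ "Pow (Col x) \<union> Pow (Col y)"]) (use colfin xy in auto)
  moreover have "FF \<subseteq> \<SS>" unfolding FF_def using P5 xy by blast
  ultimately obtain s where s: "s \<in> S" "s \<notin> \<Union>FF" "\<forall>F\<in>FF. insert s F \<in> \<SS>"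
    using ashB by blast
  have sx: "s \<notin> Col x" and sy: "s \<notin> Col y" using s(2) unfolding FF_def by blast+
  define T' where "T' r u v = (T r u v \<or> (r = s \<and> ((u = x \<and> v = y) \<or> (u = y \<and> v = x))))" for r u v
  have Tyx: "\<forall>r\<in>S. \<not> T r y x" using P2 unc xy by blast
  have Tin: "\<And>r u v. T r u v \<Longrightarrow> r \<in> S \<and> u \<in> C \<and> v \<in> C" using fs unfolding fin_struct_def by blast
  have agree: "\<forall>u v. (\<exists>r\<in>S. T r u v) \<longrightarrow> (\<forall>s. T' s u v = T s u v)"
    unfolding T'_def using unc Tyx by blast
  have fs': "fin_struct S C T'" using fs s xy unfolding fin_struct_def T'_def by blast
  have c1: "\<forall>u\<in>C. \<forall>r\<in>S. \<not> T' r u u" using P1 xy unfolding T'_def by blast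
  have c2: "\<forall>u\<in>C. \<forall>v\<in>C. \<forall>r\<in>S. T' r u v \<longrightarrow> T' r v u" using P2 unfolding T'_def by blast
  have c3: "\<forall>u\<in>C. \<forall>v\<in>C. \<forall>r\<in>S. \<forall>t\<in>S. T' r u v \<and> T' t u v \<longrightarrow> r = t"
    using P3 unc Tyx unfolding T'_def by metis
  have c4: "\<forall>u\<in>C. \<forall>v\<in>C. \<forall>w\<in>C. \<forall>r\<in>S. T' r u v \<and> T' r u w \<longrightarrow> v = w"
  proof (intro ballI impI)
    fix u v w r assume h: "u \<in> C" "v \<in> C" "w \<in> C" "r \<in> S" "T' r u v \<and> T' r u w"
    show "v = w"
    proof (cases "T r u v \<and> T r u w")
      case True then show ?thesis using P4 h by blast
    next
      case False
      then show ?thesis using h sx sy xy unfolding T'_def Col_def by blast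
    qed
  qed
  have c5: "\<forall>u\<in>C. \<forall>F. F \<noteq> {} \<and> F \<subseteq> {r\<in>S. \<exists>v\<in>C. T' r u v} \<longrightarrow> F \<in> \<SS>"
  proof (intro ballI allI impI)
    fix u F assume u: "u \<in> C" and F: "F \<noteq> {} \<and> F \<subseteq> {r\<in>S. \<exists>v\<in>C. T' r u v}"
    show "F \<in> \<SS>"
    proof (cases "s \<in> F \<and> (u = x \<or> u = y)")
      case False
      then have "F \<subseteq> Col u" using F unfolding Col_def T'_def by blast
      then show ?thesis using P5 u F by blast
    next
      case True
      have sub: "F - {s} \<subseteq> Col u" using F unfolding Col_def T'_def by blast
      show ?thesis
      proof (cases "F - {s} = {}")
        case True
        then have "F = {s}" using F by blast
        then show ?thesis using ashS s by simp
      next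
        case False
        then have "F - {s} \<in> FF" using sub True unfolding FF_def by blast
        then have "insert s (F - {s}) \<in> \<SS>" using s by blast
        moreover have "insert s (F - {s}) = F" using True by blast
        ultimately show ?thesis by simp
      qed
    qed
  qed
  have P': "P0 S \<SS> C T'" unfolding P0_def using fs' c1 c2 c3 c4 c5 by (intro conjI)
  have "Unc S C T' \<subseteq> Unc S C T" unfolding Unc_def T'_def by blast
  moreover have "(x,y) \<in> Unc S C T" "(x,y) \<notin> Unc S C T'" unfolding Unc_def T'_def using xy unc s by auto
  ultimately have "Unc S C T' \<subset> Unc S C T" by blast
  then show ?thesis using P' agree by blast
qed

lemma complete:
  assumes ash: "ash S \<SS>" and P: "P0 S \<SS> C T"
  shows "\<exists>T'. A_ash S \<SS> C T' \<and> (\<forall>u v. (\<exists>r\<in>S. T r u v) \<longrightarrow> (\<forall>s. T' s u v = T s u v))"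
  using P
proof (induct "card (Unc S C T)" arbitrary: T rule: less_induct)
  case less
  have finC: "finite C" using less.prems unfolding P0_def fin_struct_def by blast
  have finU: "finite (Unc S C T)" for T
    by (rule finite_subset[of _ "C \<times> C"]) (auto simp: Unc_def finC)
  show ?case
  proof (cases "Unc S C T = {}")
    case True
    then have "A_ash S \<SS> C T" using less.prems unfolding A_ash_P0 Unc_def by blast
    then show ?thesis by blast
  next
    case False
    then obtain x y where "(x,y) \<in> Unc S C T" by auto
    then have xy: "x \<in> C" "y \<in> C" "x \<noteq> y" "\<forall>r\<in>S. \<not> T r x y" unfolding Unc_def by auto
    obtain T1 where T1: "P0 S \<SS> C T1" "Unc S C T1 \<subset> Unc S C T"
      "\<forall>u v. (\<exists>r\<in>S. T r u v) \<longrightarrow> (\<forall>s. T1 s u v = T s u v)"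
      using step[OF ash less.prems xy] by blast
    have "card (Unc S C T1) < card (Unc S C T)" using T1(2) finU by (simp add: psubset_card_mono)
    then obtain T2 where T2: "A_ash S \<SS> C T2" "\<forall>u v. (\<exists>r\<in>S. T1 r u v) \<longrightarrow> (\<forall>s. T2 s u v = T1 s u v)"
      using less.hyps T1(1) by blast
    have "\<forall>u v. (\<exists>r\<in>S. T r u v) \<longrightarrow> (\<forall>s. T2 s u v = T s u v)"
      using T1(3) T2(2) by metis
    then show ?thesis using T2(1) by blast
  qed
qed

lemma P0D:
  assumes "P0 S \<SS> A R"
  shows "fin_struct S A R"
    and "\<And>x s. x \<in> A \<Longrightarrow> s \<in> S \<Longrightarrow> \<not> R s x x"
    and "\<And>x y s. x \<in> A \<Longrightarrow> y \<in> A \<Longrightarrow> s \<in> S \<Longrightarrow> R s x y \<Longrightarrow> R s y x"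
    and "\<And>x y s t. x \<in> A \<Longrightarrow> y \<in> A \<Longrightarrow> s \<in> S \<Longrightarrow> t \<in> S \<Longrightarrow> R s x y \<Longrightarrow> R t x y \<Longrightarrow> s = t"
    and "\<And>x y z s. x \<in> A \<Longrightarrow> y \<in> A \<Longrightarrow> z \<in> A \<Longrightarrow> s \<in> S \<Longrightarrow> R s x y \<Longrightarrow> R s x z \<Longrightarrow> y = z"
    and "\<And>x F. x \<in> A \<Longrightarrow> F \<noteq> {} \<Longrightarrow> F \<subseteq> {r\<in>S. \<exists>u\<in>A. R r x u} \<Longrightarrow> F \<in> \<SS>"
    and "\<And>r u v. R r u v \<Longrightarrow> r \<in> S \<and> u \<in> A \<and> v \<in> A"
    and "finite A"
proof -
  obtain fs: "fin_struct S A R" and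
     Q1: "\<forall>x\<in>A. \<forall>s\<in>S. \<not> R s x x" and
     Q2: "\<forall>x\<in>A. \<forall>y\<in>A. \<forall>s\<in>S. R s x y \<longrightarrow> R s y x" and
     Q3: "\<forall>x\<in>A. \<forall>y\<in>A. \<forall>s\<in>S. \<forall>t\<in>S. R s x y \<and> R t x y \<longrightarrow> s = t" and
     Q4: "\<forall>x\<in>A. \<forall>y\<in>A. \<forall>z\<in>A. \<forall>s\<in>S. R s x y \<and> R s x z \<longrightarrow> y = z" and
     Q5: "\<forall>x\<in>A. \<forall>F. F \<noteq> {} \<and> F \<subseteq> {r\<in>S. \<exists>u\<in>A. R r x u} \<longrightarrow> F \<in> \<SS>"
    using assms unfolding P0_def by (elim conjE)
  show "fin_struct S A R" by fact
  show "\<And>x s. x \<in> A \<Longrightarrow> s \<in> S \<Longrightarrow> \<not> R s x x" using Q1 by blast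
  show "\<And>x y s. x \<in> A \<Longrightarrow> y \<in> A \<Longrightarrow> s \<in> S \<Longrightarrow> R s x y \<Longrightarrow> R s y x" using Q2 by blast
  show "\<And>x y s t. x \<in> A \<Longrightarrow> y \<in> A \<Longrightarrow> s \<in> S \<Longrightarrow> t \<in> S \<Longrightarrow> R s x y \<Longrightarrow> R t x y \<Longrightarrow> s = t" using Q3 by blast
  show "\<And>x y z s. x \<in> A \<Longrightarrow> y \<in> A \<Longrightarrow> z \<in> A \<Longrightarrow> s \<in> S \<Longrightarrow> R s x y \<Longrightarrow> R s x z \<Longrightarrow> y = z" using Q4 by blast
  show "\<And>x F. x \<in> A \<Longrightarrow> F \<noteq> {} \<Longrightarrow> F \<subseteq> {r\<in>S. \<exists>u\<in>A. R r x u} \<Longrightarrow> F \<in> \<SS>" using Q5 by blast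
  show "\<And>r u v. R r u v \<Longrightarrow> r \<in> S \<and> u \<in> A \<and> v \<in> A" using fs unfolding fin_struct_def by blast
  show "finite A" using fs unfolding fin_struct_def by blast
qed

lemma A_ashD:
  assumes "A_ash S \<SS> A R"
  shows "P0 S \<SS> A R" "\<And>x y. x \<in> A \<Longrightarrow> y \<in> A \<Longrightarrow> x \<noteq> y \<Longrightarrow> \<exists>r\<in>S. R r x y"
  using assms unfolding A_ash_P0 by blast+

lemma down:
  assumes A: "A_ash S \<SS> A R" and fB: "fin_struct S B Q" and e: "embedding S f B Q A R"
  shows "A_ash S \<SS> B Q"
proof -
  have inj: "inj_on f B" and fB': "\<And>x. x \<in> B \<Longrightarrow> f x \<in> A"
    and eq: "\<And>s x y. s \<in> S \<Longrightarrow> x \<in> B \<Longrightarrow> y \<in> B \<Longrightarrow> Q s x y = R s (f x) (f y)"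
    using e unfolding embedding_def by auto
  have PA: "P0 S \<SS> A R" and tot: "\<And>x y. x \<in> A \<Longrightarrow> y \<in> A \<Longrightarrow> x \<noteq> y \<Longrightarrow> \<exists>r\<in>S. R r x y"
    using A_ashD[OF A] by blast+
  note D = P0D[OF PA]
  have c1: "\<forall>x\<in>B. \<forall>s\<in>S. \<not> Q s x x"
  proof (intro ballI)
    fix x s assume h: "x \<in> B" "s \<in> S"
    then show "\<not> Q s x x" using eq[OF h(2) h(1) h(1)] D(2)[OF fB'[OF h(1)] h(2)] by simp
  qed
  have c2: "\<forall>x\<in>B. \<forall>y\<in>B. \<forall>s\<in>S. Q s x y \<longrightarrow> Q s y x"
  proof (intro ballI impI)
    fix x y s assume h: "x \<in> B" "y \<in> B" "s \<in> S" "Q s x y"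
    then show "Q s y x" using eq[OF h(3) h(1) h(2)] eq[OF h(3) h(2) h(1)] D(3)[OF fB'[OF h(1)] fB'[OF h(2)] h(3)] by simp
  qed
  have c3: "\<forall>x\<in>B. \<forall>y\<in>B. \<forall>s\<in>S. \<forall>t\<in>S. Q s x y \<and> Q t x y \<longrightarrow> s = t"
  proof (intro ballI impI)
    fix x y s t assume h: "x \<in> B" "y \<in> B" "s \<in> S" "t \<in> S" "Q s x y \<and> Q t x y"
    then show "s = t" using eq[OF h(3) h(1) h(2)] eq[OF h(4) h(1) h(2)] D(4)[OF fB'[OF h(1)] fB'[OF h(2)] h(3) h(4)] by simp
  qed
  have c4: "\<forall>x\<in>B. \<forall>y\<in>B. \<forall>z\<in>B. \<forall>s\<in>S. Q s x y \<and> Q s x z \<longrightarrow> y = z"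
  proof (intro ballI impI)
    fix x y z s assume h: "x \<in> B" "y \<in> B" "z \<in> B" "s \<in> S" "Q s x y \<and> Q s x z"
    then have "f y = f z" using eq[OF h(4) h(1) h(2)] eq[OF h(4) h(1) h(3)] D(5)[OF fB'[OF h(1)] fB'[OF h(2)] fB'[OF h(3)] h(4)] by simp
    then show "y = z" using inj h unfolding inj_on_def by blast
  qed
  have c5: "\<forall>x\<in>B. \<forall>y\<in>B. x \<noteq> y \<longrightarrow> (\<exists>r\<in>S. Q r x y)"
  proof (intro ballI impI)
    fix x y assume h: "x \<in> B" "y \<in> B" "x \<noteq> y"
    then have "f x \<noteq> f y" using inj unfolding inj_on_def by blast
    then obtain r where r: "r \<in> S" "R r (f x) (f y)" using tot fB' h by blast
    then show "\<exists>r\<in>S. Q r x y" using eq[OF r(1) h(1) h(2)] by blast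
  qed
  have c6: "\<forall>x\<in>B. \<forall>F. F \<noteq> {} \<and> F \<subseteq> {r\<in>S. \<exists>u\<in>B. Q r x u} \<longrightarrow> F \<in> \<SS>"
  proof (intro ballI allI impI)
    fix x F assume h: "x \<in> B" "F \<noteq> {} \<and> F \<subseteq> {r\<in>S. \<exists>u\<in>B. Q r x u}"
    have "F \<subseteq> {r\<in>S. \<exists>u\<in>A. R r (f x) u}"
    proof
      fix r assume "r \<in> F"
      then obtain u where u: "r \<in> S" "u \<in> B" "Q r x u" using h by blast
      then have "R r (f x) (f u)" using eq[OF u(1) h(1) u(2)] by simp
      then show "r \<in> {r\<in>S. \<exists>u\<in>A. R r (f x) u}" using u fB' by blast
    qed
    then show "F \<in> \<SS>" using D(6)[OF fB'[OF h(1)]] h by blast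
  qed
  show ?thesis unfolding A_ash_def using fB c1 c2 c3 c4 c5 c6 by (intro conjI)
qed

lemma union:
  assumes "P0 S \<SS> A R" "P0 S \<SS> B Q" "A \<inter> B = {}"
  shows "P0 S \<SS> (A \<union> B) (\<lambda>r u v. R r u v \<or> Q r u v)"
proof -
  note DA = P0D[OF assms(1)] and DB = P0D[OF assms(2)]
  have Rin: "\<And>r u v. R r u v \<Longrightarrow> r \<in> S \<and> u \<in> A \<and> v \<in> A" by (rule DA(7))
  have Qin: "\<And>r u v. Q r u v \<Longrightarrow> r \<in> S \<and> u \<in> B \<and> v \<in> B" by (rule DB(7))
  have dis: "\<And>u. u \<in> A \<Longrightarrow> u \<notin> B" using assms(3) by blast
  have c0: "fin_struct S (A \<union> B) (\<lambda>r u v. R r u v \<or> Q r u v)" unfolding fin_struct_def using DA(8) DB(8) Rin Qin by blast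
  have c1: "\<forall>x\<in>A \<union> B. \<forall>s\<in>S. \<not> (R s x x \<or> Q s x x)" using DA(2) DB(2) Rin Qin by blast
  have c2: "\<forall>x\<in>A \<union> B. \<forall>y\<in>A \<union> B. \<forall>s\<in>S. (R s x y \<or> Q s x y) \<longrightarrow> (R s y x \<or> Q s y x)"
  proof (intro ballI impI)
    fix x y s assume h: "x \<in> A \<union> B" "y \<in> A \<union> B" "s \<in> S" "R s x y \<or> Q s x y"
    from h(4) show "R s y x \<or> Q s y x"
    proof
      assume "R s x y" then show ?thesis using DA(3) Rin h(3) by blast
    next
      assume "Q s x y" then show ?thesis using DB(3) Qin h(3) by blast
    qed
  qed
  have c3: "\<forall>x\<in>A \<union> B. \<forall>y\<in>A \<union> B. \<forall>s\<in>S. \<forall>t\<in>S. (R s x y \<or> Q s x y) \<and> (R t x y \<or> Q t x y) \<longrightarrow> s = t"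
  proof (intro ballI impI)
    fix x y s t assume h: "x \<in> A \<union> B" "y \<in> A \<union> B" "s \<in> S" "t \<in> S" "(R s x y \<or> Q s x y) \<and> (R t x y \<or> Q t x y)"
    show "s = t"
    proof (cases "x \<in> A")
      case True
      then have "R s x y" "R t x y" using h(5) Qin dis by blast+
      then show ?thesis using DA(4) Rin h(3,4) by blast
    next
      case False
      then have "Q s x y" "Q t x y" using h(5) Rin by blast+
      then show ?thesis using DB(4) Qin h(3,4) by blast
    qed
  qed
  have c4: "\<forall>x\<in>A \<union> B. \<forall>y\<in>A \<union> B. \<forall>z\<in>A \<union> B. \<forall>s\<in>S. (R s x y \<or> Q s x y) \<and> (R s x z \<or> Q s x z) \<longrightarrow> y = z"
  proof (intro ballI impI)
    fix x y z s assume h: "x \<in> A \<union> B" "y \<in> A \<union> B" "z \<in> A \<union> B" "s \<in> S" "(R s x y \<or> Q s x y) \<and> (R s x z \<or> Q s x z)"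
    show "y = z"
    proof (cases "x \<in> A")
      case True
      then have "R s x y" "R s x z" using h(5) Qin dis by blast+
      then show ?thesis using DA(5) Rin h(4) by blast
    next
      case False
      then have "Q s x y" "Q s x z" using h(5) Rin by blast+
      then show ?thesis using DB(5) Qin h(4) by blast
    qed
  qed
  have c5: "\<forall>x\<in>A \<union> B. \<forall>F. F \<noteq> {} \<and> F \<subseteq> {r\<in>S. \<exists>u\<in>A \<union> B. R r x u \<or> Q r x u} \<longrightarrow> F \<in> \<SS>"
  proof (intro ballI allI impI)
    fix x F assume x: "x \<in> A \<union> B" and h: "F \<noteq> {} \<and> F \<subseteq> {r\<in>S. \<exists>u\<in>A \<union> B. R r x u \<or> Q r x u}"
    show "F \<in> \<SS>"
    proof (cases "x \<in> A")
      case True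
      then have "x \<notin> B" using dis by blast
      then have "F \<subseteq> {r\<in>S. \<exists>u\<in>A. R r x u}" using h Qin Rin by blast
      then show ?thesis using DA(6) True h by blast
    next
      case False
      then have "x \<in> B" using x by blast
      then have "F \<subseteq> {r\<in>S. \<exists>u\<in>B. Q r x u}" using h Qin Rin False by blast
      then show ?thesis using DB(6) \<open>x \<in> B\<close> h by blast
    qed
  qed
  show ?thesis unfolding P0_def using c0 c1 c2 c3 c4 c5 by (intro conjI)
qed

lemma emb_comp: "embedding S f A R B Q \<Longrightarrow> embedding S g B Q C T \<Longrightarrow> embedding S (g \<circ> f) A R C T"
  unfolding embedding_def inj_on_def by (auto simp: image_subset_iff)

lemma emb_id:
  assumes A: "A_ash S \<SS> A R" and C: "A_ash S \<SS> C T'" and sub: "A \<subseteq> C"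
    and ag: "\<forall>u v. (\<exists>r\<in>S. T0 r u v) \<longrightarrow> (\<forall>s. T' s u v = T0 s u v)"
    and res: "\<And>s u v. u \<in> A \<Longrightarrow> v \<in> A \<Longrightarrow> T0 s u v = R s u v"
  shows "embedding S id A R C T'"
  unfolding embedding_def
proof (intro conjI ballI)
  show "inj_on id A" by simp
  show "id ` A \<subseteq> C" using sub by simp
  fix s x y assume h: "s \<in> S" "x \<in> A" "y \<in> A"
  show "R s x y = T' s (id x) (id y)"
  proof (cases "x = y")
    case True
    then show ?thesis using P0D(2)[OF A_ashD(1)[OF A]] P0D(2)[OF A_ashD(1)[OF C]] h sub by auto
  next
    case False
    then obtain r where "r \<in> S" "R r x y" using A_ashD(2)[OF A] h by blast
    then have "T' s x y = T0 s x y" using ag res h by blast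
    then show ?thesis using res h by simp
  qed
qed

lemma joint:
  assumes ash: "ash S \<SS>" and A: "A_ash S \<SS> A R" and B: "A_ash S \<SS> B Q"
  shows "\<exists>C T. A_ash S \<SS> C T \<and> embeds S A R C T \<and> embeds S B Q C T"
proof -
  note DA = P0D[OF A_ashD(1)[OF A]] and DB = P0D[OF A_ashD(1)[OF B]]
  define m where "m = Suc (Max (insert 0 A))"
  have Am: "\<And>a. a \<in> A \<Longrightarrow> a < m"
  proof -
    fix a assume "a \<in> A"
    then have "a \<le> Max (insert 0 A)" using DA(8) by simp
    then show "a < m" unfolding m_def by simp
  qed
  define B' where "B' = (\<lambda>b. b + m) ` B"
  define Q' where "Q' r u v = (m \<le> u \<and> m \<le> v \<and> Q r (u - m) (v - m))" for r u v
  have B'm: "\<And>u. u \<in> B' \<Longrightarrow> m \<le> u" unfolding B'_def by auto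
  have Q'in: "\<forall>r u v. Q' r u v \<longrightarrow> r \<in> S \<and> u \<in> B' \<and> v \<in> B'"
  proof (intro allI impI)
    fix r u v assume h: "Q' r u v"
    then have "r \<in> S" "u - m \<in> B" "v - m \<in> B" "m \<le> u" "m \<le> v" using DB(7) unfolding Q'_def by blast+
    then show "r \<in> S \<and> u \<in> B' \<and> v \<in> B'" unfolding B'_def
      by (metis image_eqI le_add_diff_inverse2)
  qed
  have "finite B'" unfolding B'_def using DB(8) by simp
  then have fB': "fin_struct S B' Q'" unfolding fin_struct_def using Q'in by blast
  have eB': "embedding S (\<lambda>u. u - m) B' Q' B Q"
    unfolding embedding_def
  proof (intro conjI ballI)
    show "inj_on (\<lambda>u. u - m) B'" unfolding inj_on_def B'_def by auto
    show "(\<lambda>u. u - m) ` B' \<subseteq> B" unfolding B'_def by auto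
    fix s x y assume "s \<in> S" "x \<in> B'" "y \<in> B'"
    then show "Q' s x y = Q s (x - m) (y - m)" unfolding Q'_def using B'm by auto
  qed
  have AB': "A_ash S \<SS> B' Q'" by (rule down[OF B fB' eB'])
  have eB: "embedding S (\<lambda>b. b + m) B Q B' Q'"
    unfolding embedding_def B'_def Q'_def inj_on_def by auto
  have dis: "A \<inter> B' = {}" using Am B'm by force
  define T0 where "T0 r u v = (R r u v \<or> Q' r u v)" for r u v
  have P: "P0 S \<SS> (A \<union> B') T0"
    unfolding T0_def by (rule union[OF A_ashD(1)[OF A] A_ashD(1)[OF AB'] dis])
  obtain T' where T': "A_ash S \<SS> (A \<union> B') T'"
    "\<forall>u v. (\<exists>r\<in>S. T0 r u v) \<longrightarrow> (\<forall>s. T' s u v = T0 s u v)"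
    using complete[OF ash P] by blast
  have e1: "embedding S id A R (A \<union> B') T'"
  proof (rule emb_id[OF A T'(1) _ T'(2)])
    show "A \<subseteq> A \<union> B'" by blast
    fix s u v assume "u \<in> A" "v \<in> A"
    then show "T0 s u v = R s u v" unfolding T0_def Q'_def using Am by fastforce
  qed
  have e2: "embedding S id B' Q' (A \<union> B') T'"
  proof (rule emb_id[OF AB' T'(1) _ T'(2)])
    show "B' \<subseteq> A \<union> B'" by blast
    fix s u v assume "u \<in> B'" "v \<in> B'"
    then show "T0 s u v = Q' s u v" unfolding T0_def using B'm Am DA(7) by fastforce
  qed
  have "embeds S A R (A \<union> B') T'" unfolding embeds_def using e1 by blast
  moreover have "embeds S B Q (A \<union> B') T'" unfolding embeds_def using emb_comp[OF eB e2] by blast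
  ultimately show ?thesis using T'(1) by blast
qed

theorem lemma5:
  fixes S :: "'s set" and \<SS> :: "'s set set"
  assumes "ash S \<SS>"
  shows "is_ideal S (A_ash S \<SS>)"
  unfolding is_ideal_def
proof (intro conjI allI impI)
  fix A R assume "A_ash S \<SS> A R"
  then show "fin_struct S A R" using P0D(1)[OF A_ashD(1)] by blast
next
  have "A_ash S \<SS> {} (\<lambda>_ _ _. False)" unfolding A_ash_def fin_struct_def by simp
  then show "\<exists>A R. A_ash S \<SS> A R" by blast
next
  fix A R B Q assume h: "A_ash S \<SS> A R \<and> fin_struct S B Q \<and> embeds S B Q A R"
  then show "A_ash S \<SS> B Q" using down unfolding embeds_def by blast
next
  fix A R B Q assume h: "A_ash S \<SS> A R \<and> A_ash S \<SS> B Q"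
  then show "\<exists>C T. A_ash S \<SS> C T \<and> embeds S A R C T \<and> embeds S B Q C T"
    using joint[OF assms] by blast
qed

end
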